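(* Let $\mathbb X$ be a flow space and $x_\bullet\in\mathbb X$. If $\mathbb X$ is not dense at $x_\bullet$, then $\mathbb X$ does not admit an expansion about $x_\bullet$.
   Context: A flow space is a compact metrizable space $\mathbb X$ of topological dimension one with a continuous action $(t,x)\mapsto t.x$ of $\mathbb R$ without fixed points; orbits are oriented by increasing $t$. $\mathbb X$ is dense at $x\in\mathbb X$ if every neighbourhood of $x$ contains a point of the forward orbit $\{t.y:t>0\}$ of every $y\in\mathbb X$. $W_k$ is a wedge of $k$ circles with a chosen orientation on each circle. A positive map $f\colon W_m\to W_k$ is a continuous surjection sending wedge point to wedge point, preserving the orientation of each circle, and locally injective at every point other than the wedge point. A projection $p\colon\mathbb X\to W_k$ is a continuous surjection which is locally injective along orbits (each $x$ has $\epsilon_x>0$ with $p$ injective on $\{t.x:|t|<\epsilon_x\}$) and orientation preserving along orbits. An expansion of $\mathbb X$ about $x_\bullet$ consists of oriented wedges of circles $X_i$ ($i\ge1$) with wedge points $x_i$, positive maps $f_i\colon X_{i+1}\to X_i$, and projections $p_i\colon\mathbb X\to X_i$ with $p_i(x_\bullet)=x_i$, such that $p_n=f_{n,m}\circ p_m$ for all $m>n$, where $f_{n,m}=f_n\circ f_{n+1}\circ\cdots\circ f_{m-1}\colon X_m\to X_n$, and such that $x\mapsto(p_i(x))_{i\ge1}$ is a homeomorphism from $\mathbb X$ onto the inverse limit $\{(z_i)\in\prod_i X_i : z_i=f_i(z_{i+1})\ \forall i\}$. *)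

theory Defs
  imports "HOL-Analysis.Analysis"
begin

definition covering_dim_le :: "'a topology \<Rightarrow> nat \<Rightarrow> bool" where
  "covering_dim_le X n \<longleftrightarrow>
     (\<forall>\<U>. finite \<U> \<and> (\<forall>U\<in>\<U>. openin X U) \<and> \<Union>\<U> = topspace X \<longrightarrow>
        (\<exists>\<V>. finite \<V> \<and> (\<forall>V\<in>\<V>. openin X V) \<and> \<Union>\<V> = topspace X \<and>
              (\<forall>V\<in>\<V>. \<exists>U\<in>\<U>. V \<subseteq> U) \<and>
              (\<forall>x\<in>topspace X. card {V\<in>\<V>. x \<in> V} \<le> n + 1)))"

definition topological_dimension_one :: "'a topology \<Rightarrow> bool" where
  "topological_dimension_one X \<longleftrightarrow> covering_dim_le X 1 \<and> \<not> covering_dim_le X 0"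

definition flow_space :: "'a topology \<Rightarrow> (real \<Rightarrow> 'a \<Rightarrow> 'a) \<Rightarrow> bool" where
  "flow_space X \<phi> \<longleftrightarrow>
     compact_space X \<and> metrizable_space X \<and> topological_dimension_one X \<and>
     continuous_map (prod_topology euclideanreal X) X (\<lambda>(t, x). \<phi> t x) \<and>
     (\<forall>x\<in>topspace X. \<phi> 0 x = x) \<and>
     (\<forall>s t. \<forall>x\<in>topspace X. \<phi> (s + t) x = \<phi> s (\<phi> t x)) \<and>
     (\<forall>x\<in>topspace X. \<exists>t. \<phi> t x \<noteq> x)"

definition dense_at :: "'a topology \<Rightarrow> (real \<Rightarrow> 'a \<Rightarrow> 'a) \<Rightarrow> 'a \<Rightarrow> bool" where
  "dense_at X \<phi> x \<longleftrightarrow>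
     (\<forall>U. openin X U \<and> x \<in> U \<longrightarrow> (\<forall>y\<in>topspace X. \<exists>t>0. \<phi> t y \<in> U))"

text \<open>Circle j (j < k) is the circle of radius j+1 centred at j+1, parametrised
  by t mod 1, all circles touch only at the wedge point 0; the orientation of each
  circle is that of increasing t.\<close>

definition wedge_pt :: "nat \<Rightarrow> real \<Rightarrow> complex" where
  "wedge_pt j t = of_nat (Suc j) * (1 - cis (2 * pi * t))"

definition wedge :: "nat \<Rightarrow> complex set" where
  "wedge k = {wedge_pt j t | j t. j < k}"

definition wedge_top :: "nat \<Rightarrow> complex topology" where
  "wedge_top k = subtopology euclidean (wedge k)"

definition pos_path :: "real set \<Rightarrow> (real \<Rightarrow> complex) \<Rightarrow> bool" where
  "pos_path I \<gamma> \<longleftrightarrow>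
     (\<forall>u v j a b. u < v \<and> {u..v} \<subseteq> I \<and> \<gamma> ` {u..v} \<subseteq> wedge_pt j ` {0<..<1} \<and>
        0 < a \<and> a < 1 \<and> 0 < b \<and> b < 1 \<and> \<gamma> u = wedge_pt j a \<and> \<gamma> v = wedge_pt j b
        \<longrightarrow> a < b)"

definition positive_map :: "nat \<Rightarrow> nat \<Rightarrow> (complex \<Rightarrow> complex) \<Rightarrow> bool" where
  "positive_map m k f \<longleftrightarrow>
     continuous_map (wedge_top m) (wedge_top k) f \<and>
     f ` wedge m = wedge k \<and>
     f 0 = 0 \<and>
     (\<forall>j<m. pos_path {0<..<1} (\<lambda>t. f (wedge_pt j t))) \<and>
     (\<forall>z\<in>wedge m - {0}. \<exists>U. openin (wedge_top m) U \<and> z \<in> U \<and> inj_on f U)"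

definition projection :: "'a topology \<Rightarrow> (real \<Rightarrow> 'a \<Rightarrow> 'a) \<Rightarrow> nat \<Rightarrow> ('a \<Rightarrow> complex) \<Rightarrow> bool" where
  "projection X \<phi> k p \<longleftrightarrow>
     continuous_map X (wedge_top k) p \<and>
     p ` topspace X = wedge k \<and>
     (\<forall>x\<in>topspace X. \<exists>\<epsilon>>0. inj_on (\<lambda>t. p (\<phi> t x)) {-\<epsilon><..<\<epsilon>} \<and>
                            pos_path {-\<epsilon><..<\<epsilon>} (\<lambda>t. p (\<phi> t x)))"

definition bond_comp :: "(nat \<Rightarrow> complex \<Rightarrow> complex) \<Rightarrow> nat \<Rightarrow> nat \<Rightarrow> complex \<Rightarrow> complex" where
  "bond_comp f n m = foldr (\<lambda>i g. f i \<circ> g) [n..<m] id"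

definition inv_lim :: "(nat \<Rightarrow> nat) \<Rightarrow> (nat \<Rightarrow> complex \<Rightarrow> complex) \<Rightarrow> (nat \<Rightarrow> complex) set" where
  "inv_lim k f = {z. (\<forall>i. z i \<in> wedge (k i)) \<and> (\<forall>i. z i = f i (z (Suc i)))}"

definition inv_lim_top :: "(nat \<Rightarrow> nat) \<Rightarrow> (nat \<Rightarrow> complex \<Rightarrow> complex) \<Rightarrow> (nat \<Rightarrow> complex) topology" where
  "inv_lim_top k f = subtopology (product_topology (\<lambda>i. wedge_top (k i)) UNIV) (inv_lim k f)"

definition has_expansion :: "'a topology \<Rightarrow> (real \<Rightarrow> 'a \<Rightarrow> 'a) \<Rightarrow> 'a \<Rightarrow> bool" where
  "has_expansion X \<phi> x0 \<longleftrightarrow>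
     (\<exists>(k :: nat \<Rightarrow> nat) (f :: nat \<Rightarrow> complex \<Rightarrow> complex) (p :: nat \<Rightarrow> 'a \<Rightarrow> complex).
        (\<forall>i. positive_map (k (Suc i)) (k i) (f i)) \<and>
        (\<forall>i. projection X \<phi> (k i) (p i)) \<and>
        (\<forall>i. p i x0 = 0) \<and>
        (\<forall>n m. n < m \<longrightarrow> (\<forall>x\<in>topspace X. p n x = bond_comp f n m (p m x))) \<and>
        homeomorphic_map X (inv_lim_top k f) (\<lambda>x i. p i x))"

end

theory Submission
  imports Defs
begin


definition wr :: "complex \<Rightarrow> real" where "wr z = (Re z ^ 2 + Im z ^ 2) / Re z"

lemma cos_lt1: "0 < u \<Longrightarrow> u < 1 \<Longrightarrow> cos (2 * pi * u) < 1"
proof -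
  assume u: "0 < u" "u < 1"
  have "cos (2 * pi * u) \<noteq> 1"
  proof
    assume "cos (2 * pi * u) = 1"
    then obtain n :: int where "2 * pi * u = n * 2 * pi" by (auto simp: cos_one_2pi_int)
    then have "u = n" by simp
    with u have "0 < n" "n < 1" by simp_all
    then show False by linarith
  qed
  then show ?thesis using cos_le_one[of "2*pi*u"] by linarith
qed

lemma wedge_pt_frac: "wedge_pt j t = wedge_pt j (frac t)"
proof -
  have "cis (2 * pi * t) = cis (2 * pi * of_int \<lfloor>t\<rfloor>) * cis (2 * pi * frac t)"
    by (simp add: cis_mult frac_def algebra_simps)
  also have "\<dots> = cis (2 * pi * frac t)" by simp
  finally show ?thesis by (simp add: wedge_pt_def)
qed

lemma wedge_pt_0: "wedge_pt j 0 = 0" by (simp add: wedge_pt_def)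

lemma wedge_pt_Re: "Re (wedge_pt j u) = of_nat (Suc j) * (1 - cos (2*pi*u))"
  by (simp add: wedge_pt_def cis.sel)
lemma wedge_pt_Im: "Im (wedge_pt j u) = - (of_nat (Suc j) * sin (2*pi*u))"
  by (simp add: wedge_pt_def)

lemma wedge_pt_Re_pos: "0 < u \<Longrightarrow> u < 1 \<Longrightarrow> Re (wedge_pt j u) > 0"
  using cos_lt1 by (simp add: wedge_pt_Re)

lemma wedge_pt_wr: "0 < u \<Longrightarrow> u < 1 \<Longrightarrow> wr (wedge_pt j u) = 2 * of_nat (Suc j)"
proof -
  assume u: "0 < u" "u < 1"
  define c where "c = cos (2*pi*u)"
  define sn where "sn = sin (2*pi*u)"
  define R where "R = real (Suc j)"
  have cs: "sn^2 = 1 - c^2" unfolding sn_def c_def by (simp add: sin_squared_eq)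
  have c1: "1 - c > 0" using cos_lt1[OF u] unfolding c_def by simp
  have R: "R > 0" unfolding R_def by simp
  have "wr (wedge_pt j u) = ((R*(1-c))^2 + (-(R * sn))^2) / (R*(1-c))"
    unfolding wr_def wedge_pt_Re wedge_pt_Im R_def c_def sn_def by (simp only:)
  also have "(R*(1-c))^2 + (-(R * sn))^2 = (2*R) * (R*(1-c))"
  proof -
    have "(-(R * sn))^2 = R^2 * (1 - c^2)" using cs by (simp add: power_mult_distrib)
    then show ?thesis by (simp add: power2_eq_square algebra_simps)
  qed
  also have "(2*R) * (R*(1-c)) / (R*(1-c)) = 2*R" using c1 R by simp
  finally show ?thesis by (simp add: R_def)
qed

lemma wedge_nonzero:
  assumes "z \<in> wedge k" "z \<noteq> 0"
  shows "\<exists>j<k. \<exists>u. 0 < u \<and> u < 1 \<and> z = wedge_pt j u"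
proof -
  obtain j t where jt: "j < k" "z = wedge_pt j t" using assms(1) by (auto simp: wedge_def)
  have z: "z = wedge_pt j (frac t)" using jt wedge_pt_frac by simp
  have "frac t \<noteq> 0" using z assms(2) wedge_pt_0 by metis
  then have "0 < frac t" "frac t < 1" using frac_ge_0[of t] frac_lt_1[of t] by auto
  then show ?thesis using jt(1) z by blast
qed

lemma wedge_pt_cont[continuous_intros]: "continuous_on S (wedge_pt j)"
  unfolding wedge_pt_def by (intro continuous_intros)



lemma flow_cont_t:
  assumes "flow_space X \<phi>" "x \<in> topspace X"
  shows "continuous_map euclideanreal X (\<lambda>t. \<phi> t x)"
proof -
  have c: "continuous_map (prod_topology euclideanreal X) X (\<lambda>(t, x). \<phi> t x)"
    using assms(1) by (simp add: flow_space_def)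
  have "continuous_map euclideanreal (prod_topology euclideanreal X) (\<lambda>t. (t, x))"
    using assms(2) by (intro continuous_intros) auto
  from continuous_map_compose[OF this c] show ?thesis by (simp add: o_def)
qed

lemma flow_cont_x:
  assumes "flow_space X \<phi>"
  shows "continuous_map X X (\<phi> s)"
proof -
  have c: "continuous_map (prod_topology euclideanreal X) X (\<lambda>(t, x). \<phi> t x)"
    using assms(1) by (simp add: flow_space_def)
  have "continuous_map X (prod_topology euclideanreal X) (\<lambda>x. (s, x))"
    by (intro continuous_intros) auto
  from continuous_map_compose[OF this c] show ?thesis by (simp add: o_def)
qed

lemma flow_in:
  assumes "flow_space X \<phi>" "x \<in> topspace X"
  shows "\<phi> t x \<in> topspace X"
  using flow_cont_x[OF assms(1), of t] assms(2) unfolding continuous_map_def by blast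

lemma flow_add:
  assumes "flow_space X \<phi>" "x \<in> topspace X"
  shows "\<phi> s (\<phi> t x) = \<phi> (s + t) x"
  using assms by (simp add: flow_space_def)

lemma proj_cont:
  assumes "projection X \<phi> k p"
  shows "continuous_map X euclidean p"
  using assms unfolding projection_def wedge_top_def
  by (meson continuous_map_into_fulltopology)

lemma proj_in:
  assumes "projection X \<phi> k p" "x \<in> topspace X"
  shows "p x \<in> wedge k"
  using assms unfolding projection_def by blast

lemma loc_glob_mono:
  fixes a :: "real \<Rightarrow> real"
  assumes loc: "\<And>t. 0 < t \<Longrightarrow> \<exists>e>0. \<forall>u v. t - e < u \<longrightarrow> u < v \<longrightarrow> v < t + e \<longrightarrow> a u < a v"
    and u: "0 < u" and uv: "u < v"
  shows "a u < a v"
proof -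
  define P where "P v \<longleftrightarrow> (\<forall>w. u < w \<and> w \<le> v \<longrightarrow> a u < a w)" for v
  define S where "S = {v. u \<le> v \<and> \<not> P v}"
  have "P v"
  proof (rule ccontr)
    assume nP: "\<not> P v"
    have "v \<in> S" using nP uv unfolding S_def by simp
    then have ne: "S \<noteq> {}" by blast
    have bdd: "bdd_below S" unfolding S_def by (auto intro: bdd_belowI[of _ u])
    define s where "s = Inf S"
    have us: "u \<le> s" unfolding s_def using ne by (intro cInf_greatest) (auto simp: S_def)
    have notS: "P w" if "u \<le> w" "w < s" for w
    proof -
      have "w \<notin> S" using that cInf_lower[OF _ bdd] unfolding s_def by force
      then show ?thesis using that unfolding S_def by auto
    qed
    obtain e where e: "e > 0" "\<forall>u v. s - e < u \<longrightarrow> u < v \<longrightarrow> v < s + e \<longrightarrow> a u < a v"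
      using loc[of s] u us by auto
    have Pse: "P (s + e/2)"
      unfolding P_def
    proof (intro allI impI)
      fix w assume w: "u < w \<and> w \<le> s + e/2"
      show "a u < a w"
      proof (cases "w < s")
        case True then show ?thesis using notS[of w] w unfolding P_def by auto
      next
        case False
        show ?thesis
        proof (cases "s = u")
          case True then show ?thesis using e w by auto
        next
          case False
          define w0 where "w0 = max u (s - e) / 2 + s / 2"
          have w0: "u < w0" "w0 < s" "s - e < w0" using False us e(1) unfolding w0_def by (auto simp: max_def field_simps)
          have "a u < a w0" using notS[of w0] w0 unfolding P_def by auto
          moreover have "a w0 < a w" using e(2) w0 w \<open>\<not> w < s\<close> by auto
          ultimately show ?thesis by simp
        qed
      qed
    qed
    have "s < s + e/2" using e by simp
    then obtain v' where v': "v' \<in> S" "v' < s + e/2"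
      using cInf_less_iff[OF ne bdd, of "s + e/2"] unfolding s_def by blast
    then have "\<not> P v'" unfolding S_def by auto
    moreover have "P v'" using Pse v' unfolding P_def by auto
    ultimately show False by simp
  qed
  then show ?thesis unfolding P_def using uv by auto
qed



lemma orbit_hits_zero:
  assumes fs: "flow_space X \<phi>" and pr: "projection X \<phi> k p" and y: "y \<in> topspace X"
  shows "\<exists>t>0. p (\<phi> t y) = 0"
proof (rule ccontr)
  assume "\<not> ?thesis"
  then have nz: "\<And>t. t > 0 \<Longrightarrow> p (\<phi> t y) \<noteq> 0" by auto
  define g where "g t = p (\<phi> t y)" for t
  have gc: "continuous_on UNIV g"
  proof -
    have "continuous_map euclideanreal euclidean (p \<circ> (\<lambda>t. \<phi> t y))"
      by (rule continuous_map_compose[OF flow_cont_t[OF fs y] proj_cont[OF pr]])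
    then show ?thesis by (simp add: g_def o_def)
  qed
  have gw: "g t \<in> wedge k" for t using proj_in[OF pr flow_in[OF fs y]] g_def by simp
  have dec: "\<exists>j<k. \<exists>u. 0<u \<and> u<1 \<and> g t = wedge_pt j u" if "t>0" for t
    using wedge_nonzero[OF gw] nz[OF that] g_def by simp
  have Re_pos: "Re (g t) \<noteq> 0" if "t > 0" for t using dec[OF that] wedge_pt_Re_pos by (metis less_irrefl)
  have wrc: "continuous_on {0<..} (\<lambda>t. wr (g t))"
    unfolding wr_def
    by (intro continuous_intros continuous_on_subset[OF gc]) (auto dest: Re_pos)
  have const: "(\<lambda>t. wr (g t)) constant_on {0<..}"
  proof (rule continuous_discrete_range_constant[OF _ wrc])
    show "connected {0::real<..}" by simp
    fix x :: real assume x: "x \<in> {0<..}"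
    show "\<exists>e>0. \<forall>y. y \<in> {0<..} \<and> wr (g y) \<noteq> wr (g x) \<longrightarrow> e \<le> norm (wr (g y) - wr (g x))"
    proof (intro exI[of _ 1] conjI allI impI)
      fix z assume z: "z \<in> {0<..} \<and> wr (g z) \<noteq> wr (g x)"
      obtain j u where ju: "0<u" "u<1" "g z = wedge_pt j u" using dec[of z] z by auto
      obtain j' u' where ju': "0<u'" "u'<1" "g x = wedge_pt j' u'" using dec[of x] x by auto
      have "wr (g z) = 2 * real (Suc j)" "wr (g x) = 2 * real (Suc j')"
        using ju ju' wedge_pt_wr by auto
      then show "1 \<le> norm (wr (g z) - wr (g x))" using z by auto
    qed simp
  qed
  obtain j0 u1 where j0: "j0 < k" "0<u1" "u1<1" "g 1 = wedge_pt j0 u1" using dec[of 1] by auto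
  have arc: "\<exists>u. 0<u \<and> u<1 \<and> g t = wedge_pt j0 u" if t0: "t>0" for t
  proof -
    obtain j u where ju: "0<u" "u<1" "g t = wedge_pt j u" using dec[OF t0] by auto
    have "wr (g t) = wr (g 1)" using const t0 unfolding constant_on_def by force
    then have "j = j0" using ju j0 wedge_pt_wr by auto
    then show ?thesis using ju by blast
  qed
  define a where "a t = (SOME u. 0<u \<and> u<1 \<and> g t = wedge_pt j0 u)" for t
  have aP: "0 < a t \<and> a t < 1 \<and> g t = wedge_pt j0 (a t)" if "t>0" for t
    using someI_ex[OF arc[OF that]] unfolding a_def .
  have loc: "\<exists>e>0. \<forall>u v. t - e < u \<longrightarrow> u < v \<longrightarrow> v < t + e \<longrightarrow> a u < a v" if t: "t>0" for t
  proof -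
    have xt: "\<phi> t y \<in> topspace X" by (rule flow_in[OF fs y])
    obtain e' where e': "e'>0" "pos_path {-e'<..<e'} (\<lambda>s. p (\<phi> s (\<phi> t y)))"
      using pr xt unfolding projection_def by blast
    show ?thesis
    proof (intro exI[of _ "min e' t"] conjI allI impI)
      show "min e' t > 0" using e' t by simp
      fix u v assume uv: "t - min e' t < u" "u < v" "v < t + min e' t"
      have eq: "p (\<phi> s (\<phi> t y)) = g (s + t)" for s using flow_add[OF fs y] g_def by simp
      have u0: "u > 0" "v > 0" using uv by auto
      have A1: "u - t < v - t" using uv by simp
      have A2: "{u - t..v - t} \<subseteq> {-e'<..<e'}" using uv by auto
      have A3: "(\<lambda>s. p (\<phi> s (\<phi> t y))) ` {u-t..v-t} \<subseteq> wedge_pt j0 ` {0<..<1}"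
      proof
        fix z assume "z \<in> (\<lambda>s. p (\<phi> s (\<phi> t y))) ` {u-t..v-t}"
        then obtain s where s: "s \<in> {u-t..v-t}" "z = g (s+t)" using eq by auto
        then have "s + t > 0" using u0 by auto
        then show "z \<in> wedge_pt j0 ` {0<..<1}" using aP[of "s+t"] s by auto
      qed
      have A4: "p (\<phi> (u-t) (\<phi> t y)) = wedge_pt j0 (a u)" using eq aP[of u] u0 by simp
      have A5: "p (\<phi> (v-t) (\<phi> t y)) = wedge_pt j0 (a v)" using eq aP[of v] u0 by simp
      show "a u < a v"
        using e'(2)[unfolded pos_path_def, rule_format, of "u-t" "v-t" j0 "a u" "a v"]
          A1 A2 A3 A4 A5 aP[of u] aP[of v] u0 by blast
    qed
  qed
  have mono: "a u < a v" if "0 < u" "u < v" for u v by (rule loc_glob_mono[OF loc that])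
  define L where "L = Sup (a ` {0<..})"
  have bddA: "bdd_above (a ` {0<..})" using aP by (auto intro!: bdd_aboveI[of _ 1] less_imp_le)
  have aL: "a t \<le> L" if "t>0" for t unfolding L_def by (rule cSup_upper) (use that bddA in auto)
  have Lapprox: "\<exists>T>0. L - e < a T" if "e>0" for e
  proof -
    have "L - e < Sup (a ` {0<..})" using that unfolding L_def by simp
    then show ?thesis using less_cSup_iff[OF _ bddA] by auto
  qed
  have tends: "(\<lambda>n. a (f n)) \<longlonglongrightarrow> L" if fl: "filterlim f at_top sequentially" for f :: "nat \<Rightarrow> real"
  proof (rule LIMSEQ_I)
    fix r :: real assume "0 < r"
    obtain T where T: "T>0" "L - r < a T" using Lapprox[OF \<open>0 < r\<close>] by auto
    from fl have "eventually (\<lambda>n. f n \<ge> T) sequentially" by (simp add: filterlim_at_top)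
    then obtain N where N: "\<forall>n\<ge>N. f n \<ge> T" by (auto simp: eventually_sequentially)
    show "\<exists>no. \<forall>n\<ge>no. norm (a (f n) - L) < r"
    proof (intro exI allI impI)
      fix n assume "N \<le> n"
      then have fn: "T \<le> f n" using N by auto
      have "a T \<le> a (f n)" using mono[of T "f n"] fn T(1) by (cases "T = f n") auto
      moreover have "a (f n) \<le> L" using aL fn T(1) by auto
      ultimately show "norm (a (f n) - L) < r" using T by auto
    qed
  qed
  obtain M d where Md: "Metric_space M d" "X = Metric_space.mtopology M d"
    using fs unfolding flow_space_def metrizable_space_def by blast
  have cs: "compact_space (Metric_space.mtopology M d)" using fs Md unfolding flow_space_def by simp
  have tM: "topspace X = M" using Md Metric_space.topspace_mtopology by metis
  define \<sigma> where "\<sigma> n = \<phi> (real n + 1) y" for n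
  have "range \<sigma> \<subseteq> M" using flow_in[OF fs y] tM unfolding \<sigma>_def by auto
  then obtain w r where w: "w \<in> M" "strict_mono r" "limitin X (\<sigma> \<circ> r) w sequentially"
    using cs Metric_space.compact_space_sequentially[OF Md(1)] Md(2) by metis
  have wX: "w \<in> topspace X" using w tM by simp
  have key: "p (\<phi> s w) = wedge_pt j0 L" for s
  proof -
    have l1: "limitin X (\<phi> s \<circ> (\<sigma> \<circ> r)) (\<phi> s w) sequentially"
      by (rule continuous_map_limit[OF flow_cont_x[OF fs] w(3)])
    have l2: "limitin euclidean (p \<circ> (\<phi> s \<circ> (\<sigma> \<circ> r))) (p (\<phi> s w)) sequentially"
      by (rule continuous_map_limit[OF proj_cont[OF pr] l1])
    then have l3: "(\<lambda>n. p (\<phi> s (\<sigma> (r n)))) \<longlonglongrightarrow> p (\<phi> s w)" by (simp add: o_def)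
    have "filterlim r at_top sequentially" by (rule filterlim_subseq[OF w(2)])
    then have "filterlim (\<lambda>n. real (r n)) at_top sequentially"
      using filterlim_compose[OF filterlim_real_sequentially] by blast
    then have fr: "filterlim (\<lambda>n. (s + 1) + real (r n)) at_top sequentially"
      by (rule filterlim_tendsto_add_at_top[OF tendsto_const])
    have "eventually (\<lambda>n. (s + 1) + real (r n) > 0) sequentially"
      using fr by (simp add: filterlim_at_top_dense)
    then have ev: "eventually (\<lambda>n. wedge_pt j0 (a ((s + 1) + real (r n))) = p (\<phi> s (\<sigma> (r n)))) sequentially"
    proof (rule eventually_mono)
      fix n assume pos: "(s + 1) + real (r n) > 0"
      have "p (\<phi> s (\<sigma> (r n))) = g ((s + 1) + real (r n))"
        unfolding \<sigma>_def g_def using flow_add[OF fs y] by (simp add: algebra_simps)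
      then show "wedge_pt j0 (a ((s + 1) + real (r n))) = p (\<phi> s (\<sigma> (r n)))" using aP[OF pos] by simp
    qed
    have ic: "isCont (wedge_pt j0) L" using wedge_pt_cont[of UNIV j0] by (simp add: continuous_on_eq_continuous_at)
    have "(\<lambda>n. wedge_pt j0 (a ((s + 1) + real (r n)))) \<longlonglongrightarrow> wedge_pt j0 L"
      by (rule isCont_tendsto_compose[OF ic tends[OF fr]])
    then have "(\<lambda>n. p (\<phi> s (\<sigma> (r n)))) \<longlonglongrightarrow> wedge_pt j0 L"
      by (rule Lim_transform_eventually[OF _ ev])
    with l3 show ?thesis using LIMSEQ_unique by blast
  qed
  obtain e where e: "e>0" "inj_on (\<lambda>t. p (\<phi> t w)) {-e<..<e}"
    using pr wX unfolding projection_def by blast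
  have "(0::real) = e/2"
    by (rule inj_onD[OF e(2)]) (use key e(1) in auto)
  then show False using e(1) by simp
qed



lemma foldr_0: "(\<And>i. f i 0 = 0) \<Longrightarrow> foldr (\<lambda>i g. f i \<circ> g) xs id 0 = 0"
  by (induction xs) auto

theorem proposition3p2:
  fixes X :: "'a topology" and \<phi> :: "real \<Rightarrow> 'a \<Rightarrow> 'a" and x0 :: 'a
  assumes "flow_space X \<phi>" and "x0 \<in> topspace X" and "\<not> dense_at X \<phi> x0"
  shows "\<not> has_expansion X \<phi> x0"
proof
  assume "has_expansion X \<phi> x0"
  then obtain k f p where pos: "\<forall>i. positive_map (k (Suc i)) (k i) (f i)"
    and pr: "\<forall>i. projection X \<phi> (k i) (p i)" and p0: "\<forall>i. p i x0 = 0"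
    and comp: "\<forall>n m. n < m \<longrightarrow> (\<forall>x\<in>topspace X. p n x = bond_comp f n m (p m x))"
    and hom: "homeomorphic_map X (inv_lim_top k f) (\<lambda>x i. p i x)"
    unfolding has_expansion_def by blast
  from assms(3) obtain U y where U: "openin X U" "x0 \<in> U" "y \<in> topspace X" "\<forall>t>0. \<phi> t y \<notin> U"
    unfolding dense_at_def by blast
  define h where "h = (\<lambda>x i. p i x)"
  have Usub: "U \<subseteq> topspace X" using U(1) openin_subset by blast
  have "openin (inv_lim_top k f) (h ` U)" using homeomorphic_map_openness[OF hom Usub] U(1) h_def by simp
  then obtain T where T: "openin (product_topology (\<lambda>i. wedge_top (k i)) UNIV) T" "h ` U = T \<inter> inv_lim k f"
    unfolding inv_lim_top_def openin_subtopology by blast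
  have z0: "h x0 \<in> T" using T U(2) by blast
  then obtain V where V: "finite {i \<in> UNIV. V i \<noteq> topspace (wedge_top (k i))}"
      "\<forall>i\<in>UNIV. openin (wedge_top (k i)) (V i)" "h x0 \<in> PiE UNIV V" "PiE UNIV V \<subseteq> T"
    using T(1) unfolding openin_product_topology_alt by meson
  define F where "F = {i. V i \<noteq> topspace (wedge_top (k i))}"
  have finF: "finite F" using V(1) unfolding F_def by simp
  define m where "m = Max (insert 0 F)"
  have Fm: "i \<le> m" if "i \<in> F" for i unfolding m_def using finF that by simp
  obtain t where t: "t>0" "p m (\<phi> t y) = 0"
    using orbit_hits_zero[OF assms(1) pr[rule_format] U(3)] by blast
  have xt: "\<phi> t y \<in> topspace X" by (rule flow_in[OF assms(1) U(3)])
  have f0: "f i 0 = 0" for i using pos unfolding positive_map_def by blast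
  have zi: "p i (\<phi> t y) = 0" if "i \<le> m" for i
  proof (cases "i = m")
    case True then show ?thesis using t by simp
  next
    case False
    then have "i < m" using that by simp
    then have "p i (\<phi> t y) = bond_comp f i m (p m (\<phi> t y))" using comp xt by blast
    also have "\<dots> = 0" unfolding t(2) bond_comp_def using foldr_0[of f, OF f0] by simp
    finally show ?thesis .
  qed
  have "h (\<phi> t y) \<in> PiE UNIV V"
  proof -
    have "h (\<phi> t y) i \<in> V i" for i
    proof (cases "i \<in> F")
      case True
      then have "h (\<phi> t y) i = h x0 i" using zi[OF Fm[OF True]] p0 unfolding h_def by simp
      then show ?thesis using V(3) by (auto simp: PiE_iff)
    next
      case False
      then have "V i = wedge (k i)" unfolding F_def wedge_top_def by simp
      then show ?thesis using proj_in[OF pr[rule_format] xt] unfolding h_def by simp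
    qed
    then show ?thesis by (simp add: PiE_iff)
  qed
  then have "h (\<phi> t y) \<in> T" using V(4) by blast
  moreover have "h (\<phi> t y) \<in> inv_lim k f"
    using homeomorphic_imp_continuous_map[OF hom] xt unfolding continuous_map_def h_def inv_lim_top_def
    by auto
  ultimately have "h (\<phi> t y) \<in> h ` U" using T(2) by blast
  then obtain u' where u': "u' \<in> U" "h u' = h (\<phi> t y)" by auto
  have "inj_on h (topspace X)" using homeomorphic_imp_injective_map[OF hom] h_def by simp
  then have "u' = \<phi> t y" using u' Usub xt by (meson inj_onD subsetD)
  then show False using u'(1) U(4) t(1) by auto
qed


end
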